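(* Let $\mathbb{K}$ be a field of characteristic zero and let $\mathcal{D}=\{\Delta^{p(1)}_{\beta(1)},\ldots,\Delta^{p(k)}_{\beta(k)}\}$ be a finite set of derivations of $\mathbb{K}[x_1,\ldots,x_n]$ with $p(i)\in\mathbb{Z}^n_{\ge0}\setminus\{0\}$ (positive weight) and $\beta(i)\in\mathbb{K}^n\setminus\{0\}$. Let $\Gamma(\mathcal{D})$ be the directed graph with vertices $1,\ldots,k$ in which there is an edge from $i$ to $j$ if and only if $\beta(i)$ and $\beta(j)$ are not proportional and $\langle\beta(i),p(j)\rangle\neq0$. If the Lie algebra $\mathfrak{g}(\mathcal{D})$ generated by $\mathcal{D}$ is finite dimensional, then $\Gamma(\mathcal{D})$ contains no oriented cycles.
   Context: For $p\in\mathbb{Z}^n_{\ge0}$ and $\beta\in\mathbb{K}^n$, $\Delta^p_\beta:=x_1^{p_1}\cdots x_n^{p_n}\sum_{j=1}^n\beta_jx_j\partial_j$, where $\partial_j=\partial/\partial x_j$; its weight is $\sum_jp_j$. $\langle\beta,u\rangle:=\sum_i\beta_iu_i$. The Lie bracket is the commutator of derivations. *)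

theory Defs
  imports Main "HOL-Library.Poly_Mapping"
begin

text \<open>Polynomials in the variables x_v (v ranging over a finite type 'n, so n = CARD('n))
  with coefficients in 'k: maps from exponent vectors (monomials) to coefficients.\<close>
type_synonym ('n, 'k) mpoly = "('n \<Rightarrow>\<^sub>0 nat) \<Rightarrow>\<^sub>0 'k"

definition pdiff :: "'n \<Rightarrow> ('n, 'k::comm_semiring_1) mpoly \<Rightarrow> ('n, 'k) mpoly" where
  "pdiff j f = (\<Sum>m\<in>Poly_Mapping.keys f. Poly_Mapping.single (m - Poly_Mapping.single j 1) (of_nat (Poly_Mapping.lookup (m::'n \<Rightarrow>\<^sub>0 nat) j) * Poly_Mapping.lookup f m))"

definition var :: "'n \<Rightarrow> ('n, 'k::comm_semiring_1) mpoly" where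
  "var j = Poly_Mapping.single (Poly_Mapping.single j 1) 1"

definition xpow :: "('n::finite \<Rightarrow> nat) \<Rightarrow> ('n, 'k::comm_semiring_1) mpoly" where
  "xpow p = Poly_Mapping.single (Abs_poly_mapping p) 1"

definition const :: "'k::comm_semiring_1 \<Rightarrow> ('n, 'k) mpoly" where
  "const c = Poly_Mapping.single 0 c"

definition Delta :: "('n::finite \<Rightarrow> nat) \<Rightarrow> ('n \<Rightarrow> 'k::comm_semiring_1)
    \<Rightarrow> ('n, 'k) mpoly \<Rightarrow> ('n, 'k) mpoly" where
  "Delta p \<beta> f = xpow p * (\<Sum>j\<in>UNIV. const (\<beta> j) * (var j * pdiff j f))"

definition pair :: "('n::finite \<Rightarrow> 'k::comm_semiring_1) \<Rightarrow> ('n \<Rightarrow> nat) \<Rightarrow> 'k" where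
  "pair \<beta> u = (\<Sum>j\<in>UNIV. \<beta> j * of_nat (u j))"

definition lie_bracket :: "(('n, 'k::comm_ring_1) mpoly \<Rightarrow> ('n, 'k) mpoly)
   \<Rightarrow> (('n, 'k) mpoly \<Rightarrow> ('n, 'k) mpoly) \<Rightarrow> ('n, 'k) mpoly \<Rightarrow> ('n, 'k) mpoly" where
  "lie_bracket D E = (\<lambda>f. D (E f) - E (D f))"

definition op_scale :: "'k::comm_ring_1 \<Rightarrow> (('n, 'k) mpoly \<Rightarrow> ('n, 'k) mpoly)
   \<Rightarrow> ('n, 'k) mpoly \<Rightarrow> ('n, 'k) mpoly" where
  "op_scale c D = (\<lambda>f. const c * D f)"

inductive_set lie_gen :: "(('n, 'k::comm_ring_1) mpoly \<Rightarrow> ('n, 'k) mpoly) set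
     \<Rightarrow> (('n, 'k) mpoly \<Rightarrow> ('n, 'k) mpoly) set" for S where
  gen: "D \<in> S \<Longrightarrow> D \<in> lie_gen S"
| zero: "(\<lambda>f. 0) \<in> lie_gen S"
| add: "D \<in> lie_gen S \<Longrightarrow> E \<in> lie_gen S \<Longrightarrow> (\<lambda>f. D f + E f) \<in> lie_gen S"
| scale: "D \<in> lie_gen S \<Longrightarrow> op_scale c D \<in> lie_gen S"
| bracket: "D \<in> lie_gen S \<Longrightarrow> E \<in> lie_gen S \<Longrightarrow> lie_bracket D E \<in> lie_gen S"

definition fin_dim_ops :: "(('n, 'k::comm_ring_1) mpoly \<Rightarrow> ('n, 'k) mpoly) set \<Rightarrow> bool" where
  "fin_dim_ops L \<longleftrightarrow> (\<exists>B. finite B \<and>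
      (\<forall>D\<in>L. \<exists>c. D = (\<lambda>f. \<Sum>b\<in>B. const (c b) * b f)))"

definition proportional :: "('n \<Rightarrow> 'k::field) \<Rightarrow> ('n \<Rightarrow> 'k) \<Rightarrow> bool" where
  "proportional u v \<longleftrightarrow> (\<exists>a b. (a \<noteq> 0 \<or> b \<noteq> 0) \<and> (\<forall>j. a * u j + b * v j = 0))"

text \<open>Edges of Gamma(D) on vertices {0..<k}.\<close>
definition Gamma_edges :: "nat \<Rightarrow> (nat \<Rightarrow> 'n::finite \<Rightarrow> nat) \<Rightarrow> (nat \<Rightarrow> 'n \<Rightarrow> 'k::field)
    \<Rightarrow> (nat \<times> nat) set" where
  "Gamma_edges k p \<beta> = {(i, j). i < k \<and> j < k \<and> \<not> proportional (\<beta> i) (\<beta> j)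
       \<and> pair (\<beta> i) (p j) \<noteq> 0}"

end

theory Submission
  imports Defs
begin


definition pairm :: "('n::finite \<Rightarrow> 'k::comm_semiring_1) \<Rightarrow> ('n \<Rightarrow>\<^sub>0 nat) \<Rightarrow> 'k" where
  "pairm \<delta> m = (\<Sum>j\<in>UNIV. \<delta> j * of_nat (Poly_Mapping.lookup m j))"

lemma pm_induct:
  assumes "P 0" "\<And>m c. P (Poly_Mapping.single m c)" "\<And>f g. P f \<Longrightarrow> P g \<Longrightarrow> P (f + g)"
  shows "P f"
proof (induction f rule: update_induct)
  case const then show ?case using assms(1) .
next
  case (update f a b)
  have "Poly_Mapping.update a b f = f + Poly_Mapping.single a b"
    by (rule poly_mapping_eqI) (use update(1) in \<open>auto simp: lookup_update lookup_add lookup_single in_keys_iff when_def\<close>)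
  then show ?case using assms(2,3) update by simp
qed

lemma pdiff_single: "pdiff j (Poly_Mapping.single m c) =
   Poly_Mapping.single (m - Poly_Mapping.single j 1) (of_nat (Poly_Mapping.lookup m j) * c)"
  by (cases "c = 0") (simp_all add: pdiff_def)

lemma pdiff_add: "pdiff j (f + g) = pdiff j f + pdiff j g"
  unfolding pdiff_def
  by (rule setsum_keys_plus_distrib) (simp_all add: single_add distrib_left)

lemma sum_single: "(\<Sum>j\<in>A. Poly_Mapping.single m (y j)) = Poly_Mapping.single m (sum y A)"
  by (induction A rule: infinite_finite_induct) (simp_all add: single_add)

lemma lookup_Abs_fin[simp]: "Poly_Mapping.lookup (Abs_poly_mapping (P::'n::finite \<Rightarrow> nat)) = P"
  by simp

lemma Delta_single: "Delta P \<delta> (Poly_Mapping.single m c) =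
   Poly_Mapping.single (Abs_poly_mapping P + m) (pairm \<delta> m * c)"
proof -
  have v: "var j * pdiff j (Poly_Mapping.single m c) = Poly_Mapping.single m (of_nat (Poly_Mapping.lookup m j) * c)" for j
  proof (cases "Poly_Mapping.lookup m j = 0")
    case True then show ?thesis by (simp add: pdiff_single)
  next
    case False
    have "Poly_Mapping.single j 1 + (m - Poly_Mapping.single j 1) = m"
      by (rule poly_mapping_eqI) (use False in \<open>auto simp: lookup_add lookup_minus lookup_single when_def\<close>)
    then show ?thesis by (simp add: pdiff_single var_def mult_single)
  qed
  have "(\<Sum>j\<in>UNIV. const (\<delta> j) * (var j * pdiff j (Poly_Mapping.single m c)))
       = Poly_Mapping.single m (pairm \<delta> m * c)"
    by (simp add: v const_def mult_single sum_single pairm_def sum_distrib_right mult.assoc)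
  then show ?thesis by (simp add: Delta_def xpow_def mult_single)
qed

lemma Delta_add: "Delta P \<delta> (f + g) = Delta P \<delta> f + Delta P \<delta> g"
  by (simp add: Delta_def pdiff_add distrib_left sum.distrib)

lemma Delta_zero: "Delta P \<delta> 0 = 0"
  using Delta_single[of P \<delta> 0 0] by simp

lemma pairm_add_Abs: "pairm \<delta> (Abs_poly_mapping Q + m) = pair \<delta> Q + pairm \<delta> m"
  by (simp add: pairm_def pair_def lookup_add distrib_left sum.distrib)

lemma pairm_lin: "pairm (\<lambda>j. x * \<epsilon> j - y * \<delta> j) m = x * pairm \<epsilon> m - y * pairm (\<delta>::_\<Rightarrow>'k::comm_ring_1) m"
  by (simp add: pairm_def sum_distrib_left sum_subtractf algebra_simps)

lemma Abs_add: "Abs_poly_mapping P + (Abs_poly_mapping Q + m) = Abs_poly_mapping (\<lambda>j. P j + Q j) + (m::'n::finite \<Rightarrow>\<^sub>0 nat)"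
  by (rule poly_mapping_eqI) (simp add: lookup_add)

lemma Delta_bracket:
  fixes P :: "'n::finite \<Rightarrow> nat"
  shows "lie_bracket (Delta P \<delta>) (Delta Q \<epsilon>) =
     Delta (\<lambda>j. P j + Q j) (\<lambda>j. pair \<delta> Q * \<epsilon> j - pair \<epsilon> P * (\<delta> j::'k::comm_ring_1))"
proof
  fix f :: "('n, 'k) mpoly"
  show "lie_bracket (Delta P \<delta>) (Delta Q \<epsilon>) f = Delta (\<lambda>j. P j + Q j) (\<lambda>j. pair \<delta> Q * \<epsilon> j - pair \<epsilon> P * \<delta> j) f"
  proof (induction f rule: pm_induct)
    case 1 then show ?case by (simp add: lie_bracket_def Delta_zero)
  next
    case (2 m c)
    have e: "Abs_poly_mapping Q + (Abs_poly_mapping P + m) = Abs_poly_mapping (\<lambda>j. P j + Q j) + m"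
      by (rule poly_mapping_eqI) (simp add: lookup_add)
    have e2: "Abs_poly_mapping P + (Abs_poly_mapping Q + m) = Abs_poly_mapping (\<lambda>j. P j + Q j) + m"
      by (rule poly_mapping_eqI) (simp add: lookup_add)
    have c: "(pair \<delta> Q + pairm \<delta> m) * (pairm \<epsilon> m * c) - (pair \<epsilon> P + pairm \<epsilon> m) * (pairm \<delta> m * c)
        = pairm (\<lambda>j. pair \<delta> Q * \<epsilon> j - pair \<epsilon> P * \<delta> j) m * c"
      unfolding pairm_lin by (simp add: algebra_simps)
    show ?case
      unfolding lie_bracket_def Delta_single pairm_add_Abs e e2 single_diff[symmetric] c ..
  next
    case (3 f g) then show ?case by (simp add: lie_bracket_def Delta_add algebra_simps)
  qed
qed

lemma const_mult_single: "const c * Poly_Mapping.single m x = Poly_Mapping.single m (c * x)"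
  by (simp add: const_def mult_single)

lemma Delta_scale:
  fixes P :: "'n::finite \<Rightarrow> nat"
  shows "op_scale c (Delta P \<delta>) = Delta P (\<lambda>j. c * (\<delta> j::'k::comm_ring_1))"
proof
  fix f :: "('n, 'k) mpoly"
  show "op_scale c (Delta P \<delta>) f = Delta P (\<lambda>j. c * \<delta> j) f"
  proof (induction f rule: pm_induct)
    case 1 then show ?case by (simp add: op_scale_def Delta_zero)
  next
    case (2 m x)
    have "pairm (\<lambda>j. c * \<delta> j) m = c * pairm \<delta> m" by (simp add: pairm_def sum_distrib_left mult.assoc)
    then show ?case by (simp add: op_scale_def Delta_single const_mult_single mult.assoc)
  next
    case (3 f g) then show ?case by (simp add: op_scale_def Delta_add distrib_left)
  qed
qed

lemma Delta_var: "Delta P \<delta> (var j) = Poly_Mapping.single (Abs_poly_mapping P + Poly_Mapping.single j 1) (\<delta> j)"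
proof -
  have "pairm \<delta> (Poly_Mapping.single j 1) = \<delta> j"
  proof -
    have "(\<lambda>ja. \<delta> ja * of_nat (Poly_Mapping.lookup (Poly_Mapping.single j 1) ja)) = (\<lambda>ja. if j = ja then \<delta> ja else 0)"
      by (auto simp: lookup_single when_def)
    then show ?thesis by (simp only: pairm_def) simp
  qed
  then show ?thesis by (simp add: var_def Delta_single)
qed

lemma lookup_const_mult: "Poly_Mapping.lookup (const c * g) m = c * Poly_Mapping.lookup g m"
proof (induction g arbitrary: m rule: pm_induct)
  case 1 then show ?case by simp
next
  case (2 m c) then show ?case by (simp add: const_mult_single lookup_single when_def)
next
  case (3 f g) then show ?case by (simp add: distrib_left lookup_add)
qed

lemma keys_const_mult: "Poly_Mapping.keys (const c * g) \<subseteq> Poly_Mapping.keys g"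
  by (auto simp: in_keys_iff lookup_const_mult)



lemma fin_degrees:
  assumes "fin_dim_ops L"
  shows "finite {P :: 'n::finite \<Rightarrow> nat. \<exists>\<delta>. \<delta> \<noteq> (\<lambda>_. 0) \<and> Delta P (\<delta>::'n \<Rightarrow> 'k::comm_ring_1) \<in> L}"
proof -
  obtain B where finB: "finite B" and rep: "\<forall>D\<in>L. \<exists>c. D = (\<lambda>f. \<Sum>b\<in>B. const (c b) * b f)"
    using assms unfolding fin_dim_ops_def by blast
  define K where "K j = (\<Union>b\<in>B. Poly_Mapping.keys (b (var j)))" for j :: 'n
  have finK: "finite (K j)" for j using finB by (simp add: K_def)
  have sub: "{P. \<exists>\<delta>. \<delta> \<noteq> (\<lambda>_. 0) \<and> Delta P \<delta> \<in> L} \<subseteq>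
      (\<Union>j. (\<lambda>m. Poly_Mapping.lookup (m - Poly_Mapping.single j 1)) ` K j)"
  proof
    fix P assume "P \<in> {P. \<exists>\<delta>. \<delta> \<noteq> (\<lambda>_. 0) \<and> Delta P (\<delta>::'n \<Rightarrow> 'k) \<in> L}"
    then obtain \<delta> where d0: "\<delta> \<noteq> (\<lambda>_. 0)" and DL: "Delta P \<delta> \<in> L" by blast
    from d0 obtain j where dj: "\<delta> j \<noteq> 0" by auto
    from rep DL obtain c where Deq: "Delta P \<delta> = (\<lambda>f. \<Sum>b\<in>B. const (c b) * b f)" by blast
    have "Poly_Mapping.keys (Delta P \<delta> (var j)) \<subseteq> K j"
    proof -
      have "Poly_Mapping.keys (\<Sum>b\<in>B. const (c b) * b (var j)) \<subseteq> (\<Union>b\<in>B. Poly_Mapping.keys (const (c b) * b (var j)))"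
        by (rule keys_sum)
      also have "\<dots> \<subseteq> K j" unfolding K_def using keys_const_mult by fastforce
      finally show ?thesis by (simp add: Deq)
    qed
    then have "Abs_poly_mapping P + Poly_Mapping.single j 1 \<in> K j"
      using dj by (simp add: Delta_var)
    moreover have "P = Poly_Mapping.lookup ((Abs_poly_mapping P + Poly_Mapping.single j 1) - Poly_Mapping.single j 1)"
      by simp
    ultimately show "P \<in> (\<Union>j. (\<lambda>m. Poly_Mapping.lookup (m - Poly_Mapping.single j 1)) ` K j)"
      by blast
  qed
  show ?thesis
    by (rule finite_subset[OF sub]) (simp add: finK)
qed

lemma infinite_family:
  assumes "fin_dim_ops L" and R0: "R \<noteq> (\<lambda>_. 0)"
    and fam: "\<And>s::nat. \<exists>\<delta>. \<delta> \<noteq> (\<lambda>_. 0) \<and> Delta (\<lambda>j. Q j + s * R j) (\<delta>::'n::finite \<Rightarrow> 'k::comm_ring_1) \<in> L"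
  shows False
proof -
  let ?F = "\<lambda>s::nat. (\<lambda>j. Q j + s * R j)"
  from R0 obtain j where Rj: "R j \<noteq> 0" by auto
  have "inj ?F"
  proof
    fix a b assume "?F a = ?F b"
    then have "Q j + a * R j = Q j + b * R j" by metis
    then show "a = b" using Rj by simp
  qed
  then have "infinite (range ?F)" using finite_imageD by blast
  moreover have "range ?F \<subseteq> {P. \<exists>\<delta>. \<delta> \<noteq> (\<lambda>_. 0) \<and> Delta P (\<delta>::'n \<Rightarrow> 'k) \<in> L}"
    using fam by blast
  ultimately show False using fin_degrees[OF assms(1)] finite_subset by blast
qed

lemma pair_add: "pair \<delta> (\<lambda>j. Q j + s * R j) = pair \<delta> Q + of_nat s * pair (\<delta>::'n::finite \<Rightarrow> 'k::comm_semiring_1) R"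
  by (simp add: pair_def distrib_left sum.distrib sum_distrib_left algebra_simps)

lemma pair_add2: "pair \<delta> (\<lambda>j. s * Q j + t * R j) = of_nat s * pair \<delta> Q + of_nat t * pair (\<delta>::'n::finite \<Rightarrow> 'k::comm_semiring_1) R"
  by (simp add: pair_def distrib_left sum.distrib sum_distrib_left algebra_simps)

lemma pair_lin: "pair (\<lambda>j. x * u j + y * v j) P = x * pair u P + y * pair (v::'n::finite \<Rightarrow> 'k::comm_semiring_1) P"
  by (simp add: pair_def distrib_right sum.distrib sum_distrib_left algebra_simps)

lemma np_zero:
  assumes "\<not> proportional u v" "\<And>j. x * u j + y * v j = 0"
  shows "x = 0 \<and> y = (0::'k::field)"
  using assms unfolding proportional_def by blast

lemma bracket_in:
  assumes "Delta P \<delta> \<in> lie_gen S" "Delta Q \<epsilon> \<in> lie_gen S"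
  shows "Delta (\<lambda>j. P j + Q j) (\<lambda>j. pair \<delta> Q * \<epsilon> j - pair \<epsilon> P * (\<delta> j::'k::comm_ring_1)) \<in> lie_gen S"
  using lie_gen.bracket[OF assms] by (simp add: Delta_bracket)

lemma scale_in:
  assumes "Delta P \<delta> \<in> lie_gen S"
  shows "Delta P (\<lambda>j. c * (\<delta> j::'k::comm_ring_1)) \<in> lie_gen S"
  using lie_gen.scale[OF assms] by (simp add: Delta_scale)

lemma chain1:
  fixes \<beta> \<gamma> :: "'n::finite \<Rightarrow> 'k::comm_ring_1"
  assumes A: "Delta p \<beta> \<in> lie_gen S" and B: "Delta q \<gamma> \<in> lie_gen S"
  shows "\<exists>d. Delta (\<lambda>j. q j + s * p j) (\<lambda>j. (\<Prod>i<s. pair \<beta> q + of_nat i * pair \<beta> p) * \<gamma> j + d * \<beta> j) \<in> lie_gen S"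
proof (induction s)
  case 0
  have "Delta (\<lambda>j. q j + 0 * p j) (\<lambda>j. (\<Prod>i<0. pair \<beta> q + of_nat i * pair \<beta> p) * \<gamma> j + 0 * \<beta> j) = Delta q \<gamma>"
    by simp
  then show ?case using B by metis
next
  case (Suc s)
  then obtain d where IH: "Delta (\<lambda>j. q j + s * p j) (\<lambda>j. (\<Prod>i<s. pair \<beta> q + of_nat i * pair \<beta> p) * \<gamma> j + d * \<beta> j) \<in> lie_gen S"
    by blast
  let ?c = "\<Prod>i<s. pair \<beta> q + of_nat i * pair \<beta> p"
  let ?\<delta> = "\<lambda>j. ?c * \<gamma> j + d * \<beta> j"
  have br: "Delta (\<lambda>j. p j + (q j + s * p j)) (\<lambda>j. pair \<beta> (\<lambda>j. q j + s * p j) * ?\<delta> j - pair ?\<delta> p * \<beta> j) \<in> lie_gen S"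
    using bracket_in[OF A IH] .
  have e1: "(\<lambda>j. p j + (q j + s * p j)) = (\<lambda>j. q j + Suc s * p j)" by auto
  have e2: "(\<lambda>j. pair \<beta> (\<lambda>j. q j + s * p j) * ?\<delta> j - pair ?\<delta> p * \<beta> j)
     = (\<lambda>j. (\<Prod>i<Suc s. pair \<beta> q + of_nat i * pair \<beta> p) * \<gamma> j
          + ((pair \<beta> q + of_nat s * pair \<beta> p) * d - pair ?\<delta> p) * \<beta> j)"
    by (simp add: pair_add algebra_simps)
  show ?case using br unfolding e1 e2 by blast
qed



lemma prop_sym: "proportional u v \<Longrightarrow> proportional v (u::'n \<Rightarrow> 'k::field)"
proof -
  assume "proportional u v"
  then obtain a b where "a \<noteq> 0 \<or> b \<noteq> 0" "\<forall>j. a * u j + b * v j = 0" unfolding proportional_def by blast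
  then have "(b \<noteq> 0 \<or> a \<noteq> 0) \<and> (\<forall>j. b * v j + a * u j = 0)" by (auto simp: add.commute)
  then show ?thesis unfolding proportional_def by blast
qed

lemma pair_scale: "pair (\<lambda>j. c * u j) P = c * pair (u::'n::finite \<Rightarrow> 'k::comm_semiring_1) P"
  by (simp add: pair_def sum_distrib_left mult.assoc)

lemma case1:
  fixes \<beta> \<gamma> :: "'n::finite \<Rightarrow> 'k::field"
  assumes fin: "fin_dim_ops (lie_gen S)" and A: "Delta p \<beta> \<in> lie_gen S" and B: "Delta q \<gamma> \<in> lie_gen S"
    and p0: "p \<noteq> (\<lambda>_. 0)" and np: "\<not> proportional \<beta> \<gamma>"
    and nz: "\<forall>i::nat. pair \<beta> q + of_nat i * pair \<beta> p \<noteq> 0"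
  shows False
proof (rule infinite_family[OF fin p0])
  fix s :: nat
  obtain d where D: "Delta (\<lambda>j. q j + s * p j) (\<lambda>j. (\<Prod>i<s. pair \<beta> q + of_nat i * pair \<beta> p) * \<gamma> j + d * \<beta> j) \<in> lie_gen S"
    using chain1[OF A B] by blast
  have cne: "(\<Prod>i<s. pair \<beta> q + of_nat i * pair \<beta> p) \<noteq> 0"
    using nz by simp
  have "(\<lambda>j. (\<Prod>i<s. pair \<beta> q + of_nat i * pair \<beta> p) * \<gamma> j + d * \<beta> j) \<noteq> (\<lambda>_. 0)"
  proof
    assume "(\<lambda>j. (\<Prod>i<s. pair \<beta> q + of_nat i * pair \<beta> p) * \<gamma> j + d * \<beta> j) = (\<lambda>_. 0)"
    then have "\<And>j. d * \<beta> j + (\<Prod>i<s. pair \<beta> q + of_nat i * pair \<beta> p) * \<gamma> j = 0"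
      by (simp add: fun_eq_iff add.commute)
    then show False using np_zero[OF np] cne by blast
  qed
  then show "\<exists>\<delta>. \<delta> \<noteq> (\<lambda>_. 0) \<and> Delta (\<lambda>j. q j + s * p j) \<delta> \<in> lie_gen S" using D by blast
qed

lemma alt:
  fixes \<beta> \<gamma> :: "'n::finite \<Rightarrow> 'k::field_char_0"
  assumes A: "Delta p \<beta> \<in> lie_gen S" and B: "Delta q \<gamma> \<in> lie_gen S"
    and bp: "pair \<beta> p = 1" and bq: "pair \<beta> q = - of_nat m"
    and gq: "pair \<gamma> q = 1" and gp: "pair \<gamma> p = - of_nat m'"
    and m1: "m \<ge> 1" and m1': "m' \<ge> 1"
  shows "\<exists>u v::int. u \<le> 0 \<and> 0 < v \<and>
     Delta (\<lambda>j. k * p j + (k+1) * q j) (\<lambda>j. of_int u * \<beta> j + of_int v * \<gamma> j) \<in> lie_gen S"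
proof (induction k)
  case 0
  have "Delta (\<lambda>j. 0 * p j + (0+1) * q j) (\<lambda>j. of_int 0 * \<beta> j + of_int 1 * \<gamma> j) = Delta q \<gamma>" by simp
  then show ?case using B by (intro exI[of _ 0] exI[of _ 1]) simp
next
  case (Suc k)
  then obtain u v :: int where u: "u \<le> 0" and v: "0 < v"
    and X: "Delta (\<lambda>j. k * p j + (k+1) * q j) (\<lambda>j. of_int u * \<beta> j + of_int v * \<gamma> j) \<in> lie_gen S"
    by blast
  let ?P = "\<lambda>j. k * p j + (k+1) * q j"
  let ?\<delta> = "\<lambda>j. of_int u * \<beta> j + of_int v * \<gamma> j"
  define c1 where "c1 = int k - int m * (int k + 1)"
  define u2 where "u2 = c1 * u - (u - int m' * v)"
  define v2 where "v2 = c1 * v"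
  have br1: "Delta (\<lambda>j. p j + ?P j) (\<lambda>j. pair \<beta> ?P * ?\<delta> j - pair ?\<delta> p * \<beta> j) \<in> lie_gen S"
    using bracket_in[OF A X] .
  have pb: "pair \<beta> ?P = of_int c1"
    unfolding pair_add2 bp bq c1_def by simp
  have pd: "pair ?\<delta> p = of_int (u - int m' * v)"
    unfolding pair_lin bp gp by simp
  have e1: "(\<lambda>j. pair \<beta> ?P * ?\<delta> j - pair ?\<delta> p * \<beta> j) = (\<lambda>j. of_int u2 * \<beta> j + of_int v2 * \<gamma> j)"
    unfolding pb pd u2_def v2_def by (simp add: algebra_simps)
  have d1: "(\<lambda>j. p j + ?P j) = (\<lambda>j. (k+1) * p j + (k+1) * q j)" by (rule ext) (simp add: algebra_simps)
  have X2: "Delta (\<lambda>j. (k+1) * p j + (k+1) * q j) (\<lambda>j. of_int u2 * \<beta> j + of_int v2 * \<gamma> j) \<in> lie_gen S"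
    using br1 unfolding e1 d1 .
  let ?P2 = "\<lambda>j. (k+1) * p j + (k+1) * q j"
  let ?\<delta>2 = "\<lambda>j. of_int u2 * \<beta> j + of_int v2 * \<gamma> j"
  define c2 where "c2 = (int k + 1) * (1 - int m')"
  define u3 where "u3 = c2 * u2"
  define v3 where "v3 = c2 * v2 - (- int m * u2 + v2)"
  have br2: "Delta (\<lambda>j. q j + ?P2 j) (\<lambda>j. pair \<gamma> ?P2 * ?\<delta>2 j - pair ?\<delta>2 q * \<gamma> j) \<in> lie_gen S"
    using bracket_in[OF B X2] .
  have pg: "pair \<gamma> ?P2 = of_int c2"
    unfolding pair_add2 gq gp c2_def by (simp add: algebra_simps)
  have pd2: "pair ?\<delta>2 q = of_int (- int m * u2 + v2)"
    unfolding pair_lin bq gq by simp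
  have e2: "(\<lambda>j. pair \<gamma> ?P2 * ?\<delta>2 j - pair ?\<delta>2 q * \<gamma> j) = (\<lambda>j. of_int u3 * \<beta> j + of_int v3 * \<gamma> j)"
    unfolding pg pd2 u3_def v3_def by (simp add: algebra_simps)
  have d2: "(\<lambda>j. q j + ?P2 j) = (\<lambda>j. Suc k * p j + (Suc k + 1) * q j)" by (rule ext) (simp add: algebra_simps)
  have X3: "Delta (\<lambda>j. Suc k * p j + (Suc k + 1) * q j) (\<lambda>j. of_int u3 * \<beta> j + of_int v3 * \<gamma> j) \<in> lie_gen S"
    using br2 unfolding e2 d2 .
  have c1n: "c1 < 0"
  proof -
    have "int m * (int k + 1) \<ge> int k + 1" using mult_right_mono[of 1 "int m" "int k + 1"] m1 by simp
    then show ?thesis unfolding c1_def by linarith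
  qed
  have u2p: "u2 > 0"
  proof -
    have "(c1 - 1) * u \<ge> 0" using c1n u by (intro mult_nonpos_nonpos) auto
    moreover have "int m' * v > 0" using m1' v by (simp add: mult_pos_pos)
    moreover have "u2 = (c1 - 1) * u + int m' * v" unfolding u2_def by (simp add: algebra_simps)
    ultimately show ?thesis by linarith
  qed
  have v2n: "v2 < 0" unfolding v2_def using c1n v by (simp add: mult_neg_pos)
  have c2n: "c2 \<le> 0" unfolding c2_def using m1' by (intro mult_nonneg_nonpos) auto
  have u3n: "u3 \<le> 0" unfolding u3_def using c2n u2p by (simp add: mult_nonpos_nonneg)
  have v3p: "v3 > 0"
  proof -
    have "(c2 - 1) * v2 > 0" using c2n v2n by (intro mult_neg_neg) auto
    moreover have "int m * u2 \<ge> 0" using u2p by (simp add: mult_nonneg_nonneg)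
    moreover have "v3 = (c2 - 1) * v2 + int m * u2" unfolding v3_def by (simp add: algebra_simps)
    ultimately show ?thesis by linarith
  qed
  show ?case
    by (rule exI[of _ u3], rule exI[of _ v3]) (intro conjI u3n v3p X3)
qed



lemma two_cycle:
  fixes \<beta> \<gamma> :: "'n::finite \<Rightarrow> 'k::field_char_0"
  assumes fin: "fin_dim_ops (lie_gen S)" and A: "Delta p \<beta> \<in> lie_gen S" and B: "Delta q \<gamma> \<in> lie_gen S"
    and p0: "p \<noteq> (\<lambda>_. 0)" and q0: "q \<noteq> (\<lambda>_. 0)" and np: "\<not> proportional \<beta> \<gamma>"
    and a0: "pair \<beta> q \<noteq> 0" and b0: "pair \<gamma> p \<noteq> 0"
  shows False
proof -
  have np2: "\<not> proportional \<gamma> \<beta>" using np prop_sym by blast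
  obtain s :: nat where s: "pair \<beta> q + of_nat s * pair \<beta> p = 0"
    using case1[OF fin A B p0 np] by blast
  obtain t :: nat where t: "pair \<gamma> p + of_nat t * pair \<gamma> q = 0"
    using case1[OF fin B A q0 np2] by blast
  define \<pi> where "\<pi> = pair \<beta> p"
  define \<rho> where "\<rho> = pair \<gamma> q"
  have pi0: "\<pi> \<noteq> 0" using s a0 unfolding \<pi>_def by auto
  have rho0: "\<rho> \<noteq> 0" using t b0 unfolding \<rho>_def by auto
  have s0: "s \<ge> 1" using s a0 by (cases s) auto
  have t0: "t \<ge> 1" using t b0 by (cases t) auto
  define \<beta>' where "\<beta>' = (\<lambda>j. (1/\<pi>) * \<beta> j)"
  define \<gamma>' where "\<gamma>' = (\<lambda>j. (1/\<rho>) * \<gamma> j)"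
  have A': "Delta p \<beta>' \<in> lie_gen S" unfolding \<beta>'_def by (rule scale_in[OF A])
  have B': "Delta q \<gamma>' \<in> lie_gen S" unfolding \<gamma>'_def by (rule scale_in[OF B])
  have bp: "pair \<beta>' p = 1" unfolding \<beta>'_def pair_scale using pi0 by (simp add: \<pi>_def)
  have gq: "pair \<gamma>' q = 1" unfolding \<gamma>'_def pair_scale using rho0 by (simp add: \<rho>_def)
  have bq: "pair \<beta>' q = - of_nat s"
  proof -
    have "pair \<beta> q = - of_nat s * \<pi>" using s unfolding \<pi>_def by (simp add: eq_neg_iff_add_eq_0)
    then show ?thesis unfolding \<beta>'_def pair_scale using pi0 by simp
  qed
  have gp: "pair \<gamma>' p = - of_nat t"
  proof -
    have "pair \<gamma> p = - of_nat t * \<rho>" using t unfolding \<rho>_def by (simp add: eq_neg_iff_add_eq_0)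
    then show ?thesis unfolding \<gamma>'_def pair_scale using rho0 by simp
  qed
  have np': "\<not> proportional \<beta>' \<gamma>'"
  proof
    assume "proportional \<beta>' \<gamma>'"
    then obtain x y where xy: "x \<noteq> 0 \<or> y \<noteq> 0" and e: "\<forall>j. x * \<beta>' j + y * \<gamma>' j = 0"
      unfolding proportional_def by blast
    have "\<And>j. (x / \<pi>) * \<beta> j + (y / \<rho>) * \<gamma> j = 0" using e unfolding \<beta>'_def \<gamma>'_def by simp
    then have "x / \<pi> = 0 \<and> y / \<rho> = 0" using np_zero[OF np] by blast
    then show False using xy pi0 rho0 by simp
  qed
  have R0: "(\<lambda>j. p j + q j) \<noteq> (\<lambda>_. 0)"
  proof
    assume "(\<lambda>j. p j + q j) = (\<lambda>_. 0)"
    then have "\<And>j. p j = 0" by (metis add_is_0)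
    then show False using p0 by auto
  qed
  show False
  proof (rule infinite_family[OF fin R0])
    fix k :: nat
    obtain u v :: int where v: "0 < v" and
      X: "Delta (\<lambda>j. k * p j + (k+1) * q j) (\<lambda>j. of_int u * \<beta>' j + of_int v * \<gamma>' j) \<in> lie_gen S"
      using alt[OF A' B' bp bq gq gp s0 t0, of k] by blast
    have deg: "(\<lambda>j. k * p j + (k+1) * q j) = (\<lambda>j. q j + k * (p j + q j))"
      by (auto simp: algebra_simps)
    have nz: "(\<lambda>j. of_int u * \<beta>' j + of_int v * \<gamma>' j) \<noteq> (\<lambda>_. (0::'k))"
    proof
      assume "(\<lambda>j. of_int u * \<beta>' j + of_int v * \<gamma>' j) = (\<lambda>_. (0::'k))"
      then have "\<And>j. of_int u * \<beta>' j + of_int v * \<gamma>' j = 0" by metis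
      then have "(of_int v :: 'k) = 0" using np_zero[OF np'] by blast
      then show False using v by simp
    qed
    show "\<exists>\<delta>. \<delta> \<noteq> (\<lambda>_. 0) \<and> Delta (\<lambda>j. q j + k * (p j + q j)) \<delta> \<in> lie_gen S"
      using X nz unfolding deg by blast
  qed
qed



definition elem :: "((('n::finite), 'k::field_char_0) mpoly \<Rightarrow> ('n, 'k) mpoly) set \<Rightarrow> ('n \<Rightarrow> nat) \<times> ('n \<Rightarrow> 'k) \<Rightarrow> bool" where
  "elem S e \<longleftrightarrow> Delta (fst e) (snd e) \<in> lie_gen S \<and> fst e \<noteq> (\<lambda>_. 0) \<and> snd e \<noteq> (\<lambda>_. 0)"

definition edge :: "('n::finite \<Rightarrow> nat) \<times> ('n \<Rightarrow> 'k::field) \<Rightarrow> ('n \<Rightarrow> nat) \<times> ('n \<Rightarrow> 'k) \<Rightarrow> bool" where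
  "edge e e' \<longleftrightarrow> \<not> proportional (snd e) (snd e') \<and> pair (snd e) (fst e') \<noteq> 0"

lemma prop_refl: "proportional u (u::'n \<Rightarrow> 'k::field)"
  unfolding proportional_def by (rule exI[of _ 1], rule exI[of _ "-1"]) simp

lemma pair_plus: "pair \<delta> (\<lambda>j. P j + Q j) = pair \<delta> P + pair (\<delta>::'n::finite \<Rightarrow> 'k::comm_semiring_1) Q"
  by (simp add: pair_def distrib_left sum.distrib)

lemma pair_zero_fun: "pair (\<lambda>_. 0::'k::comm_semiring_1) P = 0"
  by (simp add: pair_def)

lemma no_cycle:
  fixes S :: "((('n::finite), 'k::field_char_0) mpoly \<Rightarrow> ('n, 'k) mpoly) set"
  assumes fin: "fin_dim_ops (lie_gen S)"
  shows "1 \<le> n \<Longrightarrow> (\<forall>i\<le>n. elem S (w i)) \<Longrightarrow> (\<forall>i<n. edge (w i) (w (Suc i))) \<Longrightarrow> w n = w 0 \<Longrightarrow> False"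
proof (induction n arbitrary: w rule: less_induct)
  case (less n)
  have el: "\<And>i. i \<le> n \<Longrightarrow> elem S (w i)" using less.prems(2) by blast
  have ed: "\<And>i. i < n \<Longrightarrow> edge (w i) (w (Suc i))" using less.prems(3) by blast
  have cl: "w n = w 0" using less.prems(4) .
  have "n = 1 \<or> n = 2 \<or> n \<ge> 3" using less.prems(1) by arith
  then show False
  proof (elim disjE)
    assume n1: "n = 1"
    have "edge (w 0) (w 1)" using ed[of 0] n1 by simp
    with cl n1 have "edge (w 0) (w 0)" by simp
    then show False by (simp add: edge_def prop_refl)
  next
    assume n2: "n = 2"
    obtain P1 \<delta>1 where w0: "w 0 = (P1, \<delta>1)" by fastforce
    obtain P2 \<delta>2 where w1: "w 1 = (P2, \<delta>2)" by fastforce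
    have e01: "edge (w 0) (w 1)" using ed[of 0] n2 by simp
    have e10: "edge (w 1) (w 0)" using ed[of 1] n2 cl by (simp add: numeral_2_eq_2)
    have el0: "elem S (w 0)" using el[of 0] by simp
    have el1: "elem S (w 1)" using el[of 1] n2 by simp
    show False
      using two_cycle[OF fin, of P1 \<delta>1 P2 \<delta>2] el0 el1 e01 e10
      unfolding w0 w1 elem_def edge_def by simp
  next
    assume n3: "n \<ge> 3"
    obtain P1 \<delta>1 where w0: "w 0 = (P1, \<delta>1)" by fastforce
    obtain P2 \<delta>2 where w1: "w 1 = (P2, \<delta>2)" by fastforce
    obtain Pm \<delta>m where wm: "w (n-1) = (Pm, \<delta>m)" by fastforce
    have el0: "elem S (w 0)" using el[of 0] by simp
    have el1: "elem S (w 1)" using el[of 1] n3 by simp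
    have e01: "edge (w 0) (w 1)" using ed[of 0] n3 by simp
    have e12: "edge (w 1) (w 2)" using ed[of 1] n3 by (simp add: numeral_2_eq_2)
    have em0: "edge (w (n-1)) (w 0)"
    proof -
      have "edge (w (n-1)) (w (Suc (n-1)))" using ed[of "n-1"] n3 by simp
      moreover have "Suc (n-1) = n" using n3 by simp
      ultimately show ?thesis using cl by simp
    qed
    from el0 have D0: "Delta P1 \<delta>1 \<in> lie_gen S" and P10: "P1 \<noteq> (\<lambda>_. 0)" and d10: "\<delta>1 \<noteq> (\<lambda>_. 0)"
      unfolding w0 elem_def by auto
    from el1 have D1: "Delta P2 \<delta>2 \<in> lie_gen S" and P20: "P2 \<noteq> (\<lambda>_. 0)" and d20: "\<delta>2 \<noteq> (\<lambda>_. 0)"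
      unfolding w1 elem_def by auto
    from e01 have np12: "\<not> proportional \<delta>1 \<delta>2" and a0: "pair \<delta>1 P2 \<noteq> 0"
      unfolding w0 w1 edge_def by auto
    from em0 have pm1: "pair \<delta>m P1 \<noteq> 0" unfolding wm w0 edge_def by auto
    show False
    proof (cases "pair \<delta>2 P1 = 0")
      case False
      show False
        using two_cycle[OF fin D0 D1 P10 P20 np12 a0 False] .
    next
      case True
      have npm: "\<not> proportional \<delta>m \<delta>2"
      proof
        assume "proportional \<delta>m \<delta>2"
        then obtain x y where xy: "x \<noteq> 0 \<or> y \<noteq> 0" and e: "\<forall>j. x * \<delta>m j + y * \<delta>2 j = 0"
          unfolding proportional_def by blast
        have "(\<lambda>j. x * \<delta>m j + y * \<delta>2 j) = (\<lambda>_. 0)" using e by auto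
        then have "pair (\<lambda>j. x * \<delta>m j + y * \<delta>2 j) P1 = 0" by (simp add: pair_zero_fun)
        then have "x * pair \<delta>m P1 = 0" unfolding pair_lin using True by simp
        then have x0: "x = 0" using pm1 by simp
        then have y0: "y \<noteq> 0" using xy by simp
        have "\<delta>2 = (\<lambda>_. 0)"
        proof
          fix j show "\<delta>2 j = 0" using e[rule_format, of j] x0 y0 by simp
        qed
        then show False using d20 by simp
      qed
      have H: "Delta (\<lambda>j. P2 j + P1 j) \<delta>2 \<in> lie_gen S"
      proof -
        have "Delta (\<lambda>j. P2 j + P1 j) (\<lambda>j. (- 1 / pair \<delta>1 P2) * (pair \<delta>2 P1 * \<delta>1 j - pair \<delta>1 P2 * \<delta>2 j)) \<in> lie_gen S"
          by (rule scale_in[OF bracket_in[OF D1 D0]])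
        moreover have "(\<lambda>j. (- 1 / pair \<delta>1 P2) * (pair \<delta>2 P1 * \<delta>1 j - pair \<delta>1 P2 * \<delta>2 j)) = \<delta>2"
          using True a0 by (auto simp: fun_eq_iff)
        ultimately show ?thesis by simp
      qed
      have H0: "(\<lambda>j. P2 j + P1 j) \<noteq> (\<lambda>_. 0)"
      proof
        assume "(\<lambda>j. P2 j + P1 j) = (\<lambda>_. 0)"
        then have "\<And>j. P1 j = 0" by (metis add_is_0)
        then show False using P10 by auto
      qed
      let ?H = "((\<lambda>j. P2 j + P1 j), \<delta>2)"
      have elH: "elem S ?H" using H H0 d20 unfolding elem_def by simp
      show False
      proof (cases "pair \<delta>m (\<lambda>j. P2 j + P1 j) = 0")
        case False
        define w' where "w' i = (if i = 0 \<or> n-1 \<le> i then ?H else w (Suc i))" for i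
        show False
        proof (rule less.IH[of "n-1" w'])
          show "n - 1 < n" "1 \<le> n - 1" using n3 by auto
          show "w' (n-1) = w' 0" unfolding w'_def by simp
          show "\<forall>i\<le>n-1. elem S (w' i)"
            using elH el unfolding w'_def by auto
          show "\<forall>i<n-1. edge (w' i) (w' (Suc i))"
          proof (intro allI impI)
            fix i assume i: "i < n - 1"
            consider "i = 0" | "0 < i \<and> i < n - 2" | "i = n - 2" using i by linarith
            then show "edge (w' i) (w' (Suc i))"
            proof cases
              case 1
              have "w' 0 = ?H" "w' (Suc 0) = w 2" unfolding w'_def using n3 by (auto simp: numeral_2_eq_2)
              then show ?thesis using 1 e12 unfolding w1 edge_def by simp
            next
              case 2
              have "w' i = w (Suc i)" "w' (Suc i) = w (Suc (Suc i))" unfolding w'_def using 2 by auto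
              moreover have "Suc i < n" using 2 by linarith
              ultimately show ?thesis using ed[of "Suc i"] by simp
            next
              case 3
              have si: "Suc (n - 2) = n - 1" using n3 by arith
              have "w' i = w (n-1)" "w' (Suc i) = ?H" unfolding w'_def using 3 n3 si by auto
              then show ?thesis using npm False unfolding wm edge_def by simp
            qed
          qed
        qed
      next
        case True2: True
        have pm2: "pair \<delta>m P2 \<noteq> 0" using True2 pm1 unfolding pair_plus by (simp add: add_eq_0_iff)
        define w' where "w' i = (if n-1 \<le> i then w 1 else w (Suc i))" for i
        show False
        proof (rule less.IH[of "n-1" w'])
          show "n - 1 < n" "1 \<le> n - 1" using n3 by auto
          show "w' (n-1) = w' 0" unfolding w'_def using n3 by simp
          show "\<forall>i\<le>n-1. elem S (w' i)"
            using el1 el unfolding w'_def by auto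
          show "\<forall>i<n-1. edge (w' i) (w' (Suc i))"
          proof (intro allI impI)
            fix i assume i: "i < n - 1"
            consider "i < n - 2" | "i = n - 2" using i by linarith
            then show "edge (w' i) (w' (Suc i))"
            proof cases
              case 1
              have "w' i = w (Suc i)" "w' (Suc i) = w (Suc (Suc i))" unfolding w'_def using 1 by auto
              moreover have "Suc i < n" using 1 by linarith
              ultimately show ?thesis using ed[of "Suc i"] by simp
            next
              case 2
              have si: "Suc (n - 2) = n - 1" using n3 by arith
              have "w' i = w (n-1)" "w' (Suc i) = w 1" unfolding w'_def using 2 n3 si by auto
              then show ?thesis using npm pm2 unfolding wm w1 edge_def by simp
            qed
          qed
        qed
      qed
    qed
  qed
qed

theorem lemma7:
  fixes k :: nat
    and p :: "nat \<Rightarrow> ('n::finite \<Rightarrow> nat)"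
    and \<beta> :: "nat \<Rightarrow> ('n \<Rightarrow> 'k::field_char_0)"
  assumes "\<forall>i<k. p i \<noteq> (\<lambda>_. 0)"
    and "\<forall>i<k. \<beta> i \<noteq> (\<lambda>_. 0)"
    and "fin_dim_ops (lie_gen {Delta (p i) (\<beta> i) | i. i < k})"
  shows "\<not> (\<exists>i. (i, i) \<in> (Gamma_edges k p \<beta>)\<^sup>+)"
proof
  assume "\<exists>i. (i, i) \<in> (Gamma_edges k p \<beta>)\<^sup>+"
  then obtain i where "(i, i) \<in> (Gamma_edges k p \<beta>)\<^sup>+" by blast
  then obtain n where n0: "n > 0" and "(i, i) \<in> (Gamma_edges k p \<beta>) ^^ n"
    unfolding trancl_power by blast
  then obtain f where f0: "f 0 = i" and fn: "f n = i"
    and fe: "\<forall>l<n. (f l, f (Suc l)) \<in> Gamma_edges k p \<beta>"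
    unfolding relpow_fun_conv by blast
  let ?S = "{Delta (p i) (\<beta> i) | i. i < k}"
  define w where "w l = (p (f l), \<beta> (f l))" for l
  have fk: "f l < k" if "l \<le> n" for l
  proof (cases "l < n")
    case True then show ?thesis using fe unfolding Gamma_edges_def by auto
  next
    case False
    then have "l = n" using that by simp
    then show ?thesis using fe n0 f0 fn unfolding Gamma_edges_def by auto
  qed
  show False
  proof (rule no_cycle[OF assms(3), of n w])
    show "1 \<le> n" using n0 by simp
    show "w n = w 0" unfolding w_def using f0 fn by simp
    show "\<forall>l\<le>n. elem ?S (w l)"
    proof (intro allI impI)
      fix l assume l: "l \<le> n"
      have "Delta (p (f l)) (\<beta> (f l)) \<in> lie_gen ?S"
        by (rule lie_gen.gen) (use fk[OF l] in blast)
      then show "elem ?S (w l)" unfolding elem_def w_def using assms(1,2) fk[OF l] by simp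
    qed
    show "\<forall>l<n. edge (w l) (w (Suc l))"
      using fe unfolding edge_def w_def Gamma_edges_def by auto
  qed
qed

end
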